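(* Let $M$ be a loopless matroid of rank $k$ on a ground set $E$ of size $n$. There is an injective map sending each chain of flats $F_0\subsetneq F_1\subsetneq\cdots\subsetneq F_m$ of $M$ (for any $m\ge0$) to a chain of flats $G_0\subsetneq G_1\subsetneq\cdots\subsetneq G_m$ of the uniform matroid $U_{k,n}$ on $E$, such that $\mathrm{rk}_M(F_j)=\mathrm{rk}_{U_{k,n}}(G_j)$ for all $0\le j\le m$.
   Context: $U_{k,n}$ on the ground set $E$ ($|E|=n$) is the matroid whose bases are all $k$-subsets of $E$. Flats of a matroid are subsets $F$ such that adding any element strictly increases the rank; loopless means every singleton has rank $1$. *)

theory Defs
  imports Main
begin

definition matroid :: "'a set \<Rightarrow> ('a set \<Rightarrow> bool) \<Rightarrow> bool" where
  "matroid E indep \<longleftrightarrow> finite E \<and> indep {} \<and>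
     (\<forall>X. indep X \<longrightarrow> X \<subseteq> E) \<and>
     (\<forall>X Y. indep Y \<and> X \<subseteq> Y \<longrightarrow> indep X) \<and>
     (\<forall>X Y. indep X \<and> indep Y \<and> card X < card Y \<longrightarrow> (\<exists>e\<in>Y - X. indep (insert e X)))"

definition mrank :: "('a set \<Rightarrow> bool) \<Rightarrow> 'a set \<Rightarrow> nat" where
  "mrank indep X = Max {card Y | Y. Y \<subseteq> X \<and> indep Y}"

definition mflat :: "'a set \<Rightarrow> ('a set \<Rightarrow> bool) \<Rightarrow> 'a set \<Rightarrow> bool" where
  "mflat E indep F \<longleftrightarrow> F \<subseteq> E \<and> (\<forall>e\<in>E - F. mrank indep (insert e F) > mrank indep F)"

definition loopless :: "'a set \<Rightarrow> ('a set \<Rightarrow> bool) \<Rightarrow> bool" where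
  "loopless E indep \<longleftrightarrow> (\<forall>e\<in>E. mrank indep {e} = 1)"

definition uniform_indep :: "'a set \<Rightarrow> nat \<Rightarrow> 'a set \<Rightarrow> bool" where
  "uniform_indep E k X \<longleftrightarrow> (\<exists>B. B \<subseteq> E \<and> card B = k \<and> X \<subseteq> B)"

definition flat_chain :: "'a set \<Rightarrow> ('a set \<Rightarrow> bool) \<Rightarrow> 'a set list \<Rightarrow> bool" where
  "flat_chain E indep Fs \<longleftrightarrow> Fs \<noteq> [] \<and> (\<forall>F\<in>set Fs. mflat E indep F) \<and>
     (\<forall>j. Suc j < length Fs \<longrightarrow> Fs ! j \<subset> Fs ! Suc j)"

end

theory Submission
  imports Defs
begin

definition cl :: "'a set \<Rightarrow> ('a set \<Rightarrow> bool) \<Rightarrow> 'a set \<Rightarrow> 'a set" where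
  "cl E indep G = {e\<in>E. e \<in> G \<or> \<not> indep (insert e G)}"

lemma m_fin: "matroid E indep \<Longrightarrow> finite E" unfolding matroid_def by blast
lemma m_sub: "matroid E indep \<Longrightarrow> indep X \<Longrightarrow> X \<subseteq> E" unfolding matroid_def by blast
lemma m_empty: "matroid E indep \<Longrightarrow> indep {}" unfolding matroid_def by blast
lemma m_aug: "matroid E indep \<Longrightarrow> indep X \<Longrightarrow> indep Y \<Longrightarrow> card X < card Y \<Longrightarrow> \<exists>e\<in>Y-X. indep (insert e X)"
  unfolding matroid_def by blast

lemma rank_fin: "matroid E indep \<Longrightarrow> finite {card Y | Y. Y \<subseteq> X \<and> indep Y}"
  by (rule finite_subset[of _ "card ` Pow E"]) (auto dest: m_sub m_fin)

lemma rank_ge: "matroid E indep \<Longrightarrow> Y \<subseteq> X \<Longrightarrow> indep Y \<Longrightarrow> card Y \<le> mrank indep X"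
  unfolding mrank_def by (rule Max_ge[OF rank_fin]) auto

lemma rank_wit: "matroid E indep \<Longrightarrow> \<exists>Y. Y \<subseteq> X \<and> indep Y \<and> card Y = mrank indep X"
proof -
  assume m: "matroid E indep"
  have "{card Y | Y. Y \<subseteq> X \<and> indep Y} \<noteq> {}" using m_empty[OF m] by blast
  from Max_in[OF rank_fin[OF m] this] show ?thesis unfolding mrank_def by auto
qed

lemma rank_mono: "matroid E indep \<Longrightarrow> X \<subseteq> X' \<Longrightarrow> mrank indep X \<le> mrank indep X'"
  by (metis rank_ge rank_wit order_trans)

lemma rank_le_card: "matroid E indep \<Longrightarrow> X \<subseteq> E \<Longrightarrow> mrank indep X \<le> card X"
  by (metis card_mono m_fin rank_wit rev_finite_subset)

lemma extend:
  assumes m: "matroid E indep" and X: "X \<subseteq> E"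
  shows "indep I \<Longrightarrow> I \<subseteq> X \<Longrightarrow> \<exists>B. I \<subseteq> B \<and> B \<subseteq> X \<and> indep B \<and> card B = mrank indep X"
proof -
  have "\<forall>I. indep I \<and> I \<subseteq> X \<and> mrank indep X - card I = d \<longrightarrow>
          (\<exists>B. I \<subseteq> B \<and> B \<subseteq> X \<and> indep B \<and> card B = mrank indep X)" for d
  proof (induction d)
    case 0
    then show ?case using rank_ge[OF m] by (metis diff_is_0_eq le_antisym order_refl)
  next
    case (Suc d)
    show ?case
    proof (intro allI impI)
      fix I assume a: "indep I \<and> I \<subseteq> X \<and> mrank indep X - card I = Suc d"
      obtain Y where Y: "Y \<subseteq> X" "indep Y" "card Y = mrank indep X" using rank_wit[OF m] by blast
      have "card I < card Y" using a Y by auto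
      then obtain e where e: "e \<in> Y - I" "indep (insert e I)" using m_aug[OF m] a Y by blast
      have fI: "finite I" using a X m_fin[OF m] finite_subset by blast
      have "card (insert e I) = Suc (card I)" using e fI by simp
      hence "indep (insert e I) \<and> insert e I \<subseteq> X \<and> mrank indep X - card (insert e I) = d"
        using a e Y by auto
      then obtain B where "insert e I \<subseteq> B \<and> B \<subseteq> X \<and> indep B \<and> card B = mrank indep X"
        using Suc.IH by blast
      then show "\<exists>B. I \<subseteq> B \<and> B \<subseteq> X \<and> indep B \<and> card B = mrank indep X" by blast
    qed
  qed
  then show "indep I \<Longrightarrow> I \<subseteq> X \<Longrightarrow> ?thesis" by blast
qed

lemma flat_cl:
  assumes m: "matroid E indep" and F: "mflat E indep F" and B: "B \<subseteq> F" "indep B"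
    "card B = mrank indep F"
  shows "cl E indep B = F"
proof -
  have FE: "F \<subseteq> E" using F unfolding mflat_def by blast
  have fB: "finite B" using B FE m_fin[OF m] finite_subset by blast
  show ?thesis
  proof
    show "cl E indep B \<subseteq> F"
    proof
      fix x assume x: "x \<in> cl E indep B"
      show "x \<in> F"
      proof (rule ccontr)
        assume xF: "x \<notin> F"
        have xE: "x \<in> E" and xB: "x \<in> B \<or> \<not> indep (insert x B)" using x unfolding cl_def by auto
        have "mrank indep F < mrank indep (insert x F)" using F xE xF unfolding mflat_def by blast
        obtain I where I: "I \<subseteq> insert x F" "indep I" "card I = mrank indep (insert x F)"
          using rank_wit[OF m] by blast
        have "card B < card I" using I B \<open>mrank indep F < mrank indep (insert x F)\<close> by linarith
        then obtain y where y: "y \<in> I - B" "indep (insert y B)" using m_aug[OF m] I B by blast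
        show False
        proof (cases "y = x")
          case True then show False using xB y B xF by auto
        next
          case False
          then have "insert y B \<subseteq> F" using y I B by auto
          from rank_ge[OF m this y(2)] show False using y fB B by simp
        qed
      qed
    qed
  next
    show "F \<subseteq> cl E indep B"
    proof
      fix x assume x: "x \<in> F"
      show "x \<in> cl E indep B"
      proof (rule ccontr)
        assume "x \<notin> cl E indep B"
        then have "x \<notin> B" "indep (insert x B)" using x FE unfolding cl_def by auto
        moreover have "insert x B \<subseteq> F" using x B by auto
        ultimately show False using rank_ge[OF m, of "insert x B" F] fB B by simp
      qed
    qed
  qed
qed

lemma flat_strict:
  assumes m: "matroid E indep" and F: "mflat E indep F" and F': "mflat E indep F'" and s: "F \<subset> F'"
  shows "mrank indep F < mrank indep F'"
proof -
  obtain e where e: "e \<in> F'" "e \<notin> F" using s by blast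
  have "e \<in> E" using e F' unfolding mflat_def by blast
  then have "mrank indep F < mrank indep (insert e F)" using F e unfolding mflat_def by blast
  also have "\<dots> \<le> mrank indep F'" using rank_mono[OF m] e s by blast
  finally show ?thesis .
qed

lemma uniform_rank:
  assumes fE: "finite E" and k: "k \<le> card E" and X: "X \<subseteq> E"
  shows "mrank (uniform_indep E k) X = min (card X) k"
  unfolding mrank_def
proof (rule Max_eqI)
  show "finite {card Y |Y. Y \<subseteq> X \<and> uniform_indep E k Y}"
    by (rule finite_subset[of _ "card ` Pow E"]) (use X fE in auto)
next
  fix y assume "y \<in> {card Y |Y. Y \<subseteq> X \<and> uniform_indep E k Y}"
  then obtain Y B where Y: "y = card Y" "Y \<subseteq> X" "B \<subseteq> E" "card B = k" "Y \<subseteq> B"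
    unfolding uniform_indep_def by blast
  have "card Y \<le> card X" using Y X fE by (meson card_mono finite_subset)
  moreover have "card Y \<le> k" using Y fE by (metis card_mono finite_subset)
  ultimately show "y \<le> min (card X) k" using Y by simp
next
  have fX: "finite X" using X fE finite_subset by blast
  obtain Y where Y: "Y \<subseteq> X" "card Y = min (card X) k" "finite Y"
    using obtain_subset_with_card_n[of "min (card X) k" X] by auto
  have cEY: "card (E - Y) = card E - card Y" using Y X fE by (meson card_Diff_subset order_trans)
  have "k - card Y \<le> card (E - Y)" using cEY k by simp
  then obtain Z where Z: "Z \<subseteq> E - Y" "card Z = k - card Y" "finite Z"
    using obtain_subset_with_card_n by metis
  have "card (Y \<union> Z) = card Y + card Z" using Z Y by (subst card_Un_disjoint) auto
  also have "\<dots> = k" using Y Z by simp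
  finally have "uniform_indep E k Y" unfolding uniform_indep_def using Y Z X
    by (intro exI[of _ "Y \<union> Z"]) auto
  then show "min (card X) k \<in> {card Y |Y. Y \<subseteq> X \<and> uniform_indep E k Y}" using Y by force
qed

lemma chain_bases:
  assumes m: "matroid E indep"
  shows "(\<forall>F\<in>set Fs. F \<subseteq> E) \<Longrightarrow> (\<forall>j. Suc j < length Fs \<longrightarrow> Fs ! j \<subseteq> Fs ! Suc j) \<Longrightarrow>
    indep I \<Longrightarrow> (Fs \<noteq> [] \<longrightarrow> I \<subseteq> hd Fs) \<Longrightarrow>
    \<exists>Bs. length Bs = length Fs \<and>
      (\<forall>j<length Fs. indep (Bs!j) \<and> Bs!j \<subseteq> Fs!j \<and> card (Bs!j) = mrank indep (Fs!j)) \<and>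
      (\<forall>j. Suc j < length Fs \<longrightarrow> Bs!j \<subseteq> Bs!Suc j) \<and> (Bs \<noteq> [] \<longrightarrow> I \<subseteq> hd Bs)"
proof (induction Fs arbitrary: I)
  case Nil
  then show ?case by auto
next
  case (Cons F Fs)
  have FE: "F \<subseteq> E" using Cons.prems by auto
  obtain B where B: "I \<subseteq> B" "B \<subseteq> F" "indep B" "card B = mrank indep F"
    using extend[OF m FE Cons.prems(3)] Cons.prems(4) by auto
  have ch: "\<forall>j. Suc j < length Fs \<longrightarrow> Fs ! j \<subseteq> Fs ! Suc j"
    using Cons.prems(2) by (metis Suc_less_eq length_Cons nth_Cons_Suc)
  have "Fs \<noteq> [] \<longrightarrow> B \<subseteq> hd Fs"
    using Cons.prems(2)[rule_format, of 0] B by (cases Fs) auto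
  then obtain Bs where Bs: "length Bs = length Fs"
      "\<forall>j<length Fs. indep (Bs!j) \<and> Bs!j \<subseteq> Fs!j \<and> card (Bs!j) = mrank indep (Fs!j)"
      "\<forall>j. Suc j < length Fs \<longrightarrow> Bs!j \<subseteq> Bs!Suc j" "Bs \<noteq> [] \<longrightarrow> B \<subseteq> hd Bs"
    using Cons.IH[OF _ ch B(3)] Cons.prems(1) by auto
  have 1: "\<forall>j<length (F # Fs). indep ((B # Bs) ! j) \<and> (B # Bs) ! j \<subseteq> (F # Fs) ! j \<and>
       card ((B # Bs) ! j) = mrank indep ((F # Fs) ! j)"
  proof (intro allI impI)
    fix j assume "j < length (F # Fs)"
    then show "indep ((B # Bs) ! j) \<and> (B # Bs) ! j \<subseteq> (F # Fs) ! j \<and>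
       card ((B # Bs) ! j) = mrank indep ((F # Fs) ! j)"
      using B Bs by (cases j) auto
  qed
  have 2: "\<forall>j. Suc j < length (F # Fs) \<longrightarrow> (B # Bs) ! j \<subseteq> (B # Bs) ! Suc j"
  proof (intro allI impI)
    fix j assume "Suc j < length (F # Fs)"
    then show "(B # Bs) ! j \<subseteq> (B # Bs) ! Suc j"
      using Bs by (cases j; cases Bs) auto
  qed
  show ?case using 1 2 Bs B by (intro exI[of _ "B # Bs"]) auto
qed

definition Q :: "'a set \<Rightarrow> ('a set \<Rightarrow> bool) \<Rightarrow> nat \<Rightarrow> 'a set list \<Rightarrow> 'a set list \<Rightarrow> bool" where
  "Q E indep k Fs Gs \<longleftrightarrow> (\<exists>Bs. length Bs = length Fs \<and>
      (\<forall>j<length Fs. indep (Bs!j) \<and> Bs!j \<subseteq> Fs!j \<and> card (Bs!j) = mrank indep (Fs!j)) \<and>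
      (\<forall>j. Suc j < length Fs \<longrightarrow> Bs!j \<subseteq> Bs!Suc j) \<and>
      Gs = map (\<lambda>B. if card B = k then E else B) Bs)"

lemma Q_ex:
  assumes m: "matroid E indep" and c: "flat_chain E indep Fs"
  shows "\<exists>Gs. Q E indep k Fs Gs"
proof -
  have "\<forall>F\<in>set Fs. F \<subseteq> E" using c unfolding flat_chain_def mflat_def by blast
  moreover have "\<forall>j. Suc j < length Fs \<longrightarrow> Fs ! j \<subseteq> Fs ! Suc j" using c unfolding flat_chain_def by blast
  ultimately obtain Bs where "length Bs = length Fs \<and>
      (\<forall>j<length Fs. indep (Bs!j) \<and> Bs!j \<subseteq> Fs!j \<and> card (Bs!j) = mrank indep (Fs!j)) \<and>
      (\<forall>j. Suc j < length Fs \<longrightarrow> Bs!j \<subseteq> Bs!Suc j)"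
    using chain_bases[OF m _ _ m_empty[OF m], of Fs] by blast
  then show ?thesis unfolding Q_def by blast
qed

lemma Q_props:
  assumes m: "matroid E indep" and k: "mrank indep E = k" and c: "flat_chain E indep Fs"
    and q: "Q E indep k Fs Gs"
  shows "flat_chain E (uniform_indep E k) Gs \<and> length Gs = length Fs \<and>
    (\<forall>j < length Fs. mrank indep (Fs ! j) = mrank (uniform_indep E k) (Gs ! j)) \<and>
    map (cl E indep) Gs = Fs"
proof -
  obtain Bs where Bs: "length Bs = length Fs"
      "\<And>j. j<length Fs \<Longrightarrow> indep (Bs!j) \<and> Bs!j \<subseteq> Fs!j \<and> card (Bs!j) = mrank indep (Fs!j)"
      "\<And>j. Suc j < length Fs \<Longrightarrow> Bs!j \<subseteq> Bs!Suc j"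
      "Gs = map (\<lambda>B. if card B = k then E else B) Bs"
    using q unfolding Q_def by blast
  have fE: "finite E" using m_fin[OF m] .
  have kE: "k \<le> card E" using rank_le_card[OF m, of E] k by simp
  have flat: "\<And>j. j < length Fs \<Longrightarrow> mflat E indep (Fs!j)" using c unfolding flat_chain_def by auto
  have FE: "\<And>j. j < length Fs \<Longrightarrow> Fs!j \<subseteq> E" using flat unfolding mflat_def by blast
  have BE: "\<And>j. j < length Fs \<Longrightarrow> Bs!j \<subseteq> E" using FE Bs(2) by blast
  have Bk: "\<And>j. j < length Fs \<Longrightarrow> card (Bs!j) \<le> k"
    using Bs(2) FE rank_mono[OF m] k by metis
  have clB: "\<And>j. j < length Fs \<Longrightarrow> cl E indep (Bs!j) = Fs!j"
    using flat_cl[OF m] flat Bs(2) by blast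
  have Eflat: "mflat E indep E" unfolding mflat_def by auto
  have Bfull: "\<And>j. j < length Fs \<Longrightarrow> card (Bs!j) = k \<Longrightarrow> Fs!j = E"
  proof -
    fix j assume j: "j < length Fs" "card (Bs!j) = k"
    have "cl E indep (Bs!j) = E" using flat_cl[OF m Eflat BE[OF j(1)]] Bs(2)[OF j(1)] j k by auto
    then show "Fs!j = E" using clB[OF j(1)] by simp
  qed
  have Gj: "\<And>j. j < length Fs \<Longrightarrow> Gs!j = (if card (Bs!j) = k then E else Bs!j)"
    using Bs(1,4) by simp
  have len: "length Gs = length Fs" using Bs by simp
  have clG: "map (cl E indep) Gs = Fs"
  proof (rule nth_equalityI)
    fix j assume "j < length (map (cl E indep) Gs)"
    then have j: "j < length Fs" using len by simp
    have "cl E indep E = E" unfolding cl_def by auto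
    then show "map (cl E indep) Gs ! j = Fs ! j" using j Gj[OF j] clB[OF j] Bfull[OF j] len by auto
  qed (use len in simp)
  have rk: "\<And>j. j < length Fs \<Longrightarrow> mrank indep (Fs ! j) = mrank (uniform_indep E k) (Gs ! j)"
  proof -
    fix j assume j: "j < length Fs"
    show "mrank indep (Fs ! j) = mrank (uniform_indep E k) (Gs ! j)"
      using Gj[OF j] uniform_rank[OF fE kE] BE[OF j] Bk[OF j] Bs(2)[OF j] kE by auto
  qed
  have uflat: "\<And>j. j < length Fs \<Longrightarrow> mflat E (uniform_indep E k) (Gs!j)"
  proof -
    fix j assume j: "j < length Fs"
    show "mflat E (uniform_indep E k) (Gs!j)"
    proof (cases "card (Bs!j) = k")
      case True then show ?thesis using Gj[OF j] Eflat unfolding mflat_def by auto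
    next
      case False
      have lt: "card (Bs!j) < k" using False Bk[OF j] by simp
      have fB: "finite (Bs!j)" using BE[OF j] fE finite_subset by blast
      show ?thesis unfolding mflat_def
      proof (intro conjI ballI)
        show "Gs ! j \<subseteq> E" using Gj[OF j] False BE[OF j] by simp
      next
        fix e assume e: "e \<in> E - Gs ! j"
        then have e': "e \<in> E" "e \<notin> Bs!j" using Gj[OF j] False by auto
        have "mrank (uniform_indep E k) (insert e (Bs!j)) = Suc (card (Bs!j))"
          using uniform_rank[OF fE kE, of "insert e (Bs!j)"] e' BE[OF j] fB lt by simp
        moreover have "mrank (uniform_indep E k) (Bs!j) = card (Bs!j)"
          using uniform_rank[OF fE kE BE[OF j]] lt by simp
        ultimately show "mrank (uniform_indep E k) (Gs ! j) < mrank (uniform_indep E k) (insert e (Gs ! j))"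
          using Gj[OF j] False by simp
      qed
    qed
  qed
  have strict: "\<And>j. Suc j < length Gs \<Longrightarrow> Gs!j \<subset> Gs!Suc j"
  proof -
    fix j assume j1: "Suc j < length Gs"
    then have j: "Suc j < length Fs" "j < length Fs" using len by auto
    have "Fs!j \<subset> Fs!Suc j" using c j unfolding flat_chain_def by blast
    then have "mrank indep (Fs!j) < mrank indep (Fs!Suc j)" using flat_strict[OF m flat flat] j by blast
    then have lt: "card (Bs!j) < card (Bs!Suc j)" using Bs(2) j by simp
    then have nk: "card (Bs!j) \<noteq> k" using Bk[OF j(1)] by simp
    show "Gs!j \<subset> Gs!Suc j"
    proof (cases "card (Bs!Suc j) = k")
      case True
      then show ?thesis using Gj[OF j(1)] Gj[OF j(2)] nk BE[OF j(2)] lt kE by auto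
    next
      case False
      then show ?thesis using Gj[OF j(1)] Gj[OF j(2)] nk Bs(3)[OF j(1)] lt by auto
    qed
  qed
  have ne: "Gs \<noteq> []" using c len unfolding flat_chain_def by auto
  have "flat_chain E (uniform_indep E k) Gs"
    unfolding flat_chain_def using ne strict uflat len by (auto simp: in_set_conv_nth)
  then show ?thesis using len rk clG by blast
qed

theorem lemma3p36:
  fixes E :: "'a set" and indep :: "'a set \<Rightarrow> bool" and k n :: nat
  assumes "matroid E indep"
    and "loopless E indep"
    and "mrank indep E = k"
    and "card E = n"
  shows "\<exists>\<phi> :: 'a set list \<Rightarrow> 'a set list.
           inj_on \<phi> {Fs. flat_chain E indep Fs} \<and>
           (\<forall>Fs. flat_chain E indep Fs \<longrightarrow>
              flat_chain E (uniform_indep E k) (\<phi> Fs) \<and>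
              length (\<phi> Fs) = length Fs \<and>
              (\<forall>j < length Fs. mrank indep (Fs ! j) = mrank (uniform_indep E k) (\<phi> Fs ! j)))"
proof -
  define \<phi> where "\<phi> = (\<lambda>Fs. SOME Gs. Q E indep k Fs Gs)"
  have P: "\<And>Fs. flat_chain E indep Fs \<Longrightarrow> flat_chain E (uniform_indep E k) (\<phi> Fs) \<and>
    length (\<phi> Fs) = length Fs \<and>
    (\<forall>j < length Fs. mrank indep (Fs ! j) = mrank (uniform_indep E k) (\<phi> Fs ! j)) \<and>
    map (cl E indep) (\<phi> Fs) = Fs"
  proof -
    fix Fs assume c: "flat_chain E indep Fs"
    have "Q E indep k Fs (\<phi> Fs)" unfolding \<phi>_def using Q_ex[OF assms(1) c] by (rule someI_ex)
    then show "?thesis Fs" using Q_props[OF assms(1) assms(3) c] by blast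
  qed
  have "inj_on \<phi> {Fs. flat_chain E indep Fs}"
    by (rule inj_onI) (metis P mem_Collect_eq)
  then show ?thesis using P by blast
qed

end
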